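(* Let $(\Omega,\mathcal H,\mathbb E)$ be a sublinear expectation space with $\mathbb E[\cdot]=\sup_{\theta\in\Theta}E_{P_\theta}[\cdot]$, where $\{P_\theta\}_{\theta\in\Theta}$ is a countably-dimensional weakly compact family of probability measures on $(\Omega,\sigma(\mathcal H))$. Let $X_1,X_2,\dots$ be a discrete IID source sequence on this space with values in a finite alphabet $\mathcal X$, let $p_\theta(x)=P_\theta(X_1=x)$, and let $d:\mathcal X\times\hat{\mathcal X}\to[0,\infty)$ be a distortion measure with $\hat{\mathcal X}$ finite. Then for any $D$, any $R_s>\hat R^I(D)$ and any $\epsilon>0$ there exist a sufficiently large $n$ and a $(\|\mathcal W\|,n,f_n,g_n)$ nonlinear source code with coding rate $R_s$ such that, with $\boldsymbol Q$ the corresponding transition probability matrix from $\mathcal X^n$ to $\hat{\mathcal X}^n$ (namely $\hat{\boldsymbol X}^n=g_n(f_n(\boldsymbol X^n))$), $$\mathcal E_{\boldsymbol Q}\big[d(\boldsymbol X^n,\hat{\boldsymbol X}^n)\big]=\inf_{\theta\in\Theta}E_{P_\theta}\big[d(\boldsymbol X^n,g_n(f_n(\boldsymbol X^n)))\big]\le D+\epsilon.$$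
   Context: Sublinear expectation space: $\mathcal H$ a linear space of real functions on $\Omega$ (containing constants, closed under $|\cdot|$ and bounded Borel functions of finitely many elements), $\mathbb E$ monotone, constant preserving, subadditive, positively homogeneous. Countably-dimensional weakly compact: for any bounded $Y_1,Y_2,\dots\in\mathcal H$ and any sequence $\{P_n\}\subset\{P_\theta\}$ there are a subsequence $\{n_k\}$ and $P\in\{P_\theta\}$ with $\lim_kP_{n_k}(\phi(Y_1,\dots,Y_d))=P(\phi(Y_1,\dots,Y_d))$ for every $d$ and bounded continuous $\phi$. IID: $\mathbb E[\phi(X_i)]=\mathbb E[\phi(X_j)]$ for all $i,j$ and bounded Borel $\phi$, and $\mathbb E[\phi(X_1,\dots,X_n)]=\mathbb E\big[\mathbb E[\phi(\boldsymbol x,X_n)]_{\boldsymbol x=(X_1,\dots,X_{n-1})}\big]$ for all $n$ and bounded Borel $\phi$. Code: $f_n:\mathcal X^n\to\mathcal W$, $g_n:\mathcal W\to\hat{\mathcal X}^n$, rate $\frac{\log\|\mathcal W\|}{n}$. Sequence distortion $d(\boldsymbol x^n,\hat{\boldsymbol x}^n)=\frac1n\sum_{i=1}^n d(x_i,\hat x_i)$. Rate distortion function: for a transition matrix $\boldsymbol Q=(q(\hat x|x))$ from $\mathcal X$ to $\hat{\mathcal X}$ put $\mathbb E_{\boldsymbol Q}[d(X,\hat X)]=\sup_\theta\sum_{x,\hat x}p_\theta(x)q(\hat x|x)d(x,\hat x)$ and $\overline I[\{p_\theta\};\boldsymbol Q]=\sup_\theta\sum_{x,\hat x}p_\theta(x)q(\hat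 x|x)\log\frac{q(\hat x|x)}{\sum_{x'}q(\hat x|x')p_\theta(x')}$; then $\hat R^I(D)=\inf\{\overline I[\{p_\theta\};\boldsymbol Q]:\mathbb E_{\boldsymbol Q}[d(X,\hat X)]\le D\}$. *)

theory Defs
  imports "HOL-Probability.Probability"
begin

definition sub_exp :: "'t set \<Rightarrow> ('t \<Rightarrow> 'o measure) \<Rightarrow> ('o \<Rightarrow> real) \<Rightarrow> real" where
  "sub_exp \<Theta> P f = (SUP \<theta>\<in>\<Theta>. \<integral>\<omega>. f \<omega> \<partial>P \<theta>)"

definition low_exp :: "'t set \<Rightarrow> ('t \<Rightarrow> 'o measure) \<Rightarrow> ('o \<Rightarrow> real) \<Rightarrow> real" where
  "low_exp \<Theta> P f = (INF \<theta>\<in>\<Theta>. \<integral>\<omega>. f \<omega> \<partial>P \<theta>)"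

text \<open>Finitely many elements Y 0..Y (d-1) of H packed as a point of the product space
  (coordinates \<open>\<ge> d\<close> set to 0); functions of finitely many elements are then
  functions \<open>(nat \<Rightarrow> real) \<Rightarrow> real\<close> applied to this packed vector.\<close>

definition pack :: "nat \<Rightarrow> (nat \<Rightarrow> 'o \<Rightarrow> real) \<Rightarrow> 'o \<Rightarrow> (nat \<Rightarrow> real)" where
  "pack d Y \<omega> = (\<lambda>i. if i < d then Y i \<omega> else 0)"

definition sublinear_expectation_space ::
  "'o measure \<Rightarrow> ('o \<Rightarrow> real) set \<Rightarrow> 't set \<Rightarrow> ('t \<Rightarrow> 'o measure) \<Rightarrow> bool" where
  "sublinear_expectation_space M H \<Theta> P \<longleftrightarrow>
     \<Theta> \<noteq> {} \<and>
     (\<forall>c. (\<lambda>_. c) \<in> H) \<and>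
     (\<forall>Y\<in>H. \<forall>Z\<in>H. (\<lambda>\<omega>. Y \<omega> + Z \<omega>) \<in> H) \<and>
     (\<forall>Y\<in>H. \<forall>c. (\<lambda>\<omega>. c * Y \<omega>) \<in> H) \<and>
     (\<forall>Y\<in>H. (\<lambda>\<omega>. \<bar>Y \<omega>\<bar>) \<in> H) \<and>
     (\<forall>d Y (\<phi>::(nat \<Rightarrow> real) \<Rightarrow> real). (\<forall>i<d. Y i \<in> H) \<longrightarrow>
         \<phi> \<in> borel_measurable borel \<longrightarrow> bounded (range \<phi>) \<longrightarrow>
         (\<lambda>\<omega>. \<phi> (pack d Y \<omega>)) \<in> H) \<and>
     H \<subseteq> borel_measurable M \<and>
     sets M = sigma_sets (space M) {Y -` B \<inter> space M | Y B. Y \<in> H \<and> B \<in> sets borel} \<and>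
     (\<forall>\<theta>\<in>\<Theta>. prob_space (P \<theta>) \<and> sets (P \<theta>) = sets M \<and> space (P \<theta>) = space M) \<and>
     (\<forall>Y\<in>H. (\<forall>\<theta>\<in>\<Theta>. integrable (P \<theta>) Y) \<and> bdd_above ((\<lambda>\<theta>. \<integral>\<omega>. Y \<omega> \<partial>P \<theta>) ` \<Theta>))"

definition countably_dim_weakly_compact ::
  "('o \<Rightarrow> real) set \<Rightarrow> 't set \<Rightarrow> ('t \<Rightarrow> 'o measure) \<Rightarrow> bool" where
  "countably_dim_weakly_compact H \<Theta> P \<longleftrightarrow>
     (\<forall>(Y::nat \<Rightarrow> 'o \<Rightarrow> real) (ts::nat \<Rightarrow> 't).
        (\<forall>i. Y i \<in> H \<and> bounded (range (Y i))) \<longrightarrow> (\<forall>n. ts n \<in> \<Theta>) \<longrightarrow>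
        (\<exists>r \<theta>. strict_mono r \<and> \<theta> \<in> \<Theta> \<and>
           (\<forall>d (\<phi>::(nat \<Rightarrow> real) \<Rightarrow> real). continuous_on UNIV \<phi> \<longrightarrow> bounded (range \<phi>) \<longrightarrow>
              (\<lambda>k. \<integral>\<omega>. \<phi> (pack d Y \<omega>) \<partial>P (ts (r k)))
                \<longlonglongrightarrow> (\<integral>\<omega>. \<phi> (pack d Y \<omega>) \<partial>P \<theta>))))"

text \<open>The source vector (X_1,...,X_n); the paper's X_i is X (i-1) here.\<close>

definition Xvec :: "(nat \<Rightarrow> 'o \<Rightarrow> 'x) \<Rightarrow> nat \<Rightarrow> 'o \<Rightarrow> 'x list" where
  "Xvec X n \<omega> = map (\<lambda>i. X i \<omega>) [0..<n]"

text \<open>IID under the sublinear expectation (finite alphabet: every function is bounded Borel).\<close>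

definition iid_source :: "'t set \<Rightarrow> ('t \<Rightarrow> 'o measure) \<Rightarrow> (nat \<Rightarrow> 'o \<Rightarrow> 'x::finite) \<Rightarrow> bool" where
  "iid_source \<Theta> P X \<longleftrightarrow>
     (\<forall>i j (\<phi>::'x \<Rightarrow> real). sub_exp \<Theta> P (\<lambda>\<omega>. \<phi> (X i \<omega>)) = sub_exp \<Theta> P (\<lambda>\<omega>. \<phi> (X j \<omega>))) \<and>
     (\<forall>n (\<phi>::'x list \<Rightarrow> real). n \<ge> 1 \<longrightarrow>
        sub_exp \<Theta> P (\<lambda>\<omega>. \<phi> (Xvec X n \<omega>)) =
        sub_exp \<Theta> P (\<lambda>\<omega>. sub_exp \<Theta> P (\<lambda>\<omega>'. \<phi> (Xvec X (n - 1) \<omega> @ [X (n - 1) \<omega>']))))"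

definition pdist :: "('t \<Rightarrow> 'o measure) \<Rightarrow> (nat \<Rightarrow> 'o \<Rightarrow> 'x) \<Rightarrow> 't \<Rightarrow> 'x \<Rightarrow> real" where
  "pdist P X \<theta> x = measure (P \<theta>) {\<omega> \<in> space (P \<theta>). X 0 \<omega> = x}"

definition stochastic :: "('x::finite \<Rightarrow> 'y::finite \<Rightarrow> real) \<Rightarrow> bool" where
  "stochastic Q \<longleftrightarrow> (\<forall>x y. Q x y \<ge> 0) \<and> (\<forall>x. (\<Sum>y\<in>UNIV. Q x y) = 1)"

definition exp_dist_Q :: "'t set \<Rightarrow> ('t \<Rightarrow> 'x::finite \<Rightarrow> real) \<Rightarrow> ('x \<Rightarrow> 'y::finite \<Rightarrow> real)
    \<Rightarrow> ('x \<Rightarrow> 'y \<Rightarrow> real) \<Rightarrow> real" where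
  "exp_dist_Q \<Theta> p Q d = (SUP \<theta>\<in>\<Theta>. \<Sum>x\<in>UNIV. \<Sum>y\<in>UNIV. p \<theta> x * Q x y * d x y)"

definition mutual_info_bar :: "'t set \<Rightarrow> ('t \<Rightarrow> 'x::finite \<Rightarrow> real) \<Rightarrow> ('x \<Rightarrow> 'y::finite \<Rightarrow> real) \<Rightarrow> real" where
  "mutual_info_bar \<Theta> p Q = (SUP \<theta>\<in>\<Theta>. \<Sum>x\<in>UNIV. \<Sum>y\<in>UNIV.
      p \<theta> x * Q x y * ln (Q x y / (\<Sum>x'\<in>UNIV. Q x' y * p \<theta> x')))"

text \<open>Rate distortion function; infimum of the empty set is +infinity.\<close>

definition rate_distortion :: "'t set \<Rightarrow> ('t \<Rightarrow> 'x::finite \<Rightarrow> real) \<Rightarrow> ('x \<Rightarrow> 'y::finite \<Rightarrow> real)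
    \<Rightarrow> real \<Rightarrow> ereal" where
  "rate_distortion \<Theta> p d D =
     (INF Q\<in>{Q. stochastic Q \<and> exp_dist_Q \<Theta> p Q d \<le> D}. ereal (mutual_info_bar \<Theta> p Q))"

definition seq_distortion :: "('x \<Rightarrow> 'y \<Rightarrow> real) \<Rightarrow> 'x list \<Rightarrow> 'y list \<Rightarrow> real" where
  "seq_distortion d xs ys = (\<Sum>i<length xs. d (xs ! i) (ys ! i)) / real (length xs)"

end

theory Submission
  imports Defs
begin

definition LL :: "nat \<Rightarrow> 'a list set" where "LL n = {xs. length xs = n}"
definition pw :: "('a \<Rightarrow> real) \<Rightarrow> 'a list \<Rightarrow> real" where "pw r zs = prod_list (map r zs)"

lemma finite_LL[simp]: "finite (LL n :: 'a::finite list set)"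
proof -
  have "LL n = {xs. set xs \<subseteq> (UNIV::'a set) \<and> length xs = n}" by (auto simp: LL_def)
  thus ?thesis using finite_lists_length_eq[of "UNIV::'a set" n] by simp
qed

lemma LL_Suc: "LL (Suc n) = (\<lambda>(z, zs). z # zs) ` (UNIV \<times> LL n)"
  by (auto simp: LL_def length_Suc_conv)

lemma sum_LL_Suc:
  "(\<Sum>zs\<in>LL (Suc n). F zs) = (\<Sum>z\<in>(UNIV::'a::finite set). \<Sum>zs\<in>LL n. F (z # zs))"
proof -
  have inj: "inj_on (\<lambda>(z, zs). z # zs) (UNIV \<times> LL n)" by (auto simp: inj_on_def)
  have "(\<Sum>zs\<in>LL (Suc n). F zs) = (\<Sum>(z,zs)\<in>UNIV \<times> LL n. F (z # zs))"
    unfolding LL_Suc by (subst sum.reindex[OF inj]) (simp add: case_prod_unfold)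
  also have "\<dots> = (\<Sum>z\<in>UNIV. \<Sum>zs\<in>LL n. F (z # zs))"
    by (simp add: sum.cartesian_product)
  finally show ?thesis .
qed

lemma LL_snoc: "LL (Suc n) = (\<lambda>(zs, z). zs @ [z]) ` (LL n \<times> UNIV)"
proof (rule set_eqI, rule iffI)
  fix xs assume "xs \<in> LL (Suc n)"
  hence "xs \<noteq> []" "length (butlast xs) = n" by (auto simp: LL_def)
  hence "xs = butlast xs @ [last xs]" by simp
  thus "xs \<in> (\<lambda>(zs, z). zs @ [z]) ` (LL n \<times> UNIV)"
    using \<open>length (butlast xs) = n\<close> by (auto simp: LL_def image_iff intro!: exI[of _ "butlast xs"])
qed (auto simp: LL_def)

lemma sum_LL_snoc:
  "(\<Sum>zs\<in>LL (Suc n). F zs) = (\<Sum>zs\<in>LL n. \<Sum>z\<in>(UNIV::'a::finite set). F (zs @ [z]))"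
proof -
  have inj: "inj_on (\<lambda>(zs, z). zs @ [z]) (LL n \<times> UNIV)" by (auto simp: inj_on_def)
  have "(\<Sum>zs\<in>LL (Suc n). F zs) = (\<Sum>(zs,z)\<in>LL n \<times> UNIV. F (zs @ [z]))"
    unfolding LL_snoc by (subst sum.reindex[OF inj]) (simp add: case_prod_unfold)
  also have "\<dots> = (\<Sum>zs\<in>LL n. \<Sum>z\<in>UNIV. F (zs @ [z]))"
    by (simp add: sum.cartesian_product)
  finally show ?thesis .
qed

lemma LL_0[simp]: "LL 0 = {[]}" by (auto simp: LL_def)

lemma pw_Cons[simp]: "pw r (z # zs) = r z * pw r zs" by (simp add: pw_def)
lemma pw_Nil[simp]: "pw r [] = 1" by (simp add: pw_def)
lemma pw_append[simp]: "pw r (xs @ ys) = pw r xs * pw r ys" by (simp add: pw_def)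
lemma pw_nonneg: "(\<And>z. r z \<ge> 0) \<Longrightarrow> pw r zs \<ge> 0"
  unfolding pw_def by (induction zs) auto

lemma sum_pw: "(\<Sum>zs\<in>LL n. pw r zs) = (\<Sum>z\<in>(UNIV::'a::finite set). r z) ^ n"
proof (induction n)
  case (Suc n) thus ?case
    by (simp add: sum_LL_Suc sum_distrib_left[symmetric] sum_distrib_right[symmetric])
qed simp

lemma sum_const_helper:
  assumes "(\<Sum>z\<in>(UNIV::'a::finite set). r z) = 1"
  shows "(\<Sum>z\<in>UNIV. c * (r z * K)) = c * (K::real)"
proof -
  have "(\<Sum>z\<in>UNIV. c * (r z * K)) = (c * K) * (\<Sum>z\<in>UNIV. r z)"
    by (simp add: sum_distrib_left algebra_simps)
  thus ?thesis using assms by simp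
qed

lemma sum_pw_S:
  assumes "(\<Sum>z\<in>(UNIV::'a::finite set). r z) = 1"
  shows "(\<Sum>zs\<in>LL n. pw r zs * sum_list (map g zs)) = real n * (\<Sum>z\<in>UNIV. r z * g z)"
proof (induction n)
  case (Suc n)
  have "(\<Sum>zs\<in>LL (Suc n). pw r zs * sum_list (map g zs))
     = (\<Sum>z\<in>UNIV. \<Sum>zs\<in>LL n. r z * g z * pw r zs + r z * (pw r zs * sum_list (map g zs)))"
    by (simp add: sum_LL_Suc algebra_simps)
  also have "\<dots> = (\<Sum>z\<in>UNIV. r z * g z + r z * (real n * (\<Sum>z\<in>UNIV. r z * g z)))"
    by (simp add: sum.distrib sum_distrib_left[symmetric] sum_pw assms Suc)
  also have "\<dots> = real (Suc n) * (\<Sum>z\<in>UNIV. r z * g z)"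
    by (simp add: sum.distrib sum_const_helper[OF assms(1)] algebra_simps)
  finally show ?case .
qed simp

lemma sum_pw_S2:
  assumes "(\<Sum>z\<in>(UNIV::'a::finite set). r z) = 1" "(\<Sum>z\<in>UNIV. r z * g z) = 0"
  shows "(\<Sum>zs\<in>LL n. pw r zs * (sum_list (map g zs))\<^sup>2) = real n * (\<Sum>z\<in>UNIV. r z * (g z)\<^sup>2)"
proof (induction n)
  case (Suc n)
  have "(\<Sum>zs\<in>LL (Suc n). pw r zs * (sum_list (map g zs))\<^sup>2)
     = (\<Sum>z\<in>UNIV. \<Sum>zs\<in>LL n. r z * (g z)\<^sup>2 * pw r zs + 2 * (r z * g z) * (pw r zs * sum_list (map g zs))
          + r z * (pw r zs * (sum_list (map g zs))\<^sup>2))"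
    by (simp add: sum_LL_Suc algebra_simps power2_eq_square)
  also have "\<dots> = (\<Sum>z\<in>UNIV. r z * (g z)\<^sup>2 + 2 * (r z * g z) * (real n * 0)
          + r z * (real n * (\<Sum>z\<in>UNIV. r z * (g z)\<^sup>2)))"
    by (simp add: sum.distrib sum_distrib_left[symmetric] sum_pw assms Suc sum_pw_S)
  also have "\<dots> = real (Suc n) * (\<Sum>z\<in>UNIV. r z * (g z)\<^sup>2)"
    by (simp add: sum.distrib sum_const_helper[OF assms(1)] algebra_simps)
  finally show ?case .
qed simp

lemma chebyshev_LL:
  fixes r h :: "'a::finite \<Rightarrow> real"
  assumes r0: "\<And>z. r z \<ge> 0" and r1: "(\<Sum>z\<in>UNIV. r z) = 1" and "\<delta> > 0" and "n \<ge> 1"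
  shows "(\<Sum>zs\<in>LL n. pw r zs * of_bool (sum_list (map h zs) > real n * ((\<Sum>z\<in>UNIV. r z * h z) + \<delta>)))
         \<le> (\<Sum>z\<in>UNIV. r z * (h z - (\<Sum>z\<in>UNIV. r z * h z))\<^sup>2) / (real n * \<delta>\<^sup>2)"
proof -
  define m where "m = (\<Sum>z\<in>UNIV. r z * h z)"
  define g where "g z = h z - m" for z
  have g0: "(\<Sum>z\<in>UNIV. r z * g z) = 0"
    by (simp add: g_def right_diff_distrib sum_subtractf m_def sum_distrib_right[symmetric] r1)
  have npos: "real n > 0" using assms by simp
  have Sg: "sum_list (map g zs) = sum_list (map h zs) - real n * m" if "zs \<in> LL n" for zs
  proof -
    have "sum_list (map g zs) = sum_list (map h zs) - real (length zs) * m"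
      by (induction zs) (auto simp: g_def algebra_simps)
    thus ?thesis using that by (simp add: LL_def)
  qed
  have pt: "pw r zs * of_bool (sum_list (map h zs) > real n * (m + \<delta>))
       \<le> pw r zs * (sum_list (map g zs))\<^sup>2 / (real n * \<delta>)\<^sup>2" if "zs \<in> LL n" for zs
  proof (cases "sum_list (map h zs) > real n * (m + \<delta>)")
    case True
    hence "sum_list (map g zs) > real n * \<delta>" using Sg[OF that] by (simp add: algebra_simps)
    moreover have "real n * \<delta> > 0" using npos assms by simp
    ultimately have "(real n * \<delta>)\<^sup>2 \<le> (sum_list (map g zs))\<^sup>2"
      by (intro power_mono) auto
    moreover have "(real n * \<delta>)\<^sup>2 > 0" using \<open>real n * \<delta> > 0\<close> by (intro zero_less_power) 
    ultimately have "1 \<le> (sum_list (map g zs))\<^sup>2 / (real n * \<delta>)\<^sup>2"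
      by (subst le_divide_eq_1_pos) auto
    hence "pw r zs * 1 \<le> pw r zs * ((sum_list (map g zs))\<^sup>2 / (real n * \<delta>)\<^sup>2)"
      by (intro mult_left_mono) (auto simp: pw_nonneg r0)
    thus ?thesis using True by simp
  next
    case False thus ?thesis by (simp add: pw_nonneg r0)
  qed
  have "(\<Sum>zs\<in>LL n. pw r zs * of_bool (sum_list (map h zs) > real n * (m + \<delta>)))
      \<le> (\<Sum>zs\<in>LL n. pw r zs * (sum_list (map g zs))\<^sup>2 / (real n * \<delta>)\<^sup>2)"
    by (intro sum_mono pt)
  also have "\<dots> = real n * (\<Sum>z\<in>UNIV. r z * (g z)\<^sup>2) / (real n * \<delta>)\<^sup>2"
    by (simp add: sum_divide_distrib[symmetric] sum_pw_S2[OF r1 g0])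
  also have "\<dots> = (\<Sum>z\<in>UNIV. r z * (g z)\<^sup>2) / (real n * \<delta>\<^sup>2)"
    using npos by (simp add: power2_eq_square field_simps)
  finally show ?thesis by (simp add: m_def g_def)
qed

lemma sum_pairs_UNIV:
  "(\<Sum>x\<in>(UNIV::'a::finite set). \<Sum>y\<in>(UNIV::'b::finite set). H x y) = (\<Sum>z\<in>UNIV. H (fst z) (snd z))"
proof -
  have "(\<Sum>x\<in>(UNIV::'a set). \<Sum>y\<in>(UNIV::'b set). H x y) = (\<Sum>z\<in>UNIV \<times> UNIV. H (fst z) (snd z))"
    by (subst sum.cartesian_product) (simp add: case_prod_unfold)
  thus ?thesis by simp
qed

lemma sum_LL_pairs:
  "(\<Sum>xs\<in>LL n. \<Sum>ys\<in>LL n. F xs ys) =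
   (\<Sum>zs\<in>LL n. F (map fst zs) (map snd zs :: 'b::finite list))" for F :: "'a::finite list \<Rightarrow> _ \<Rightarrow> real"
proof (induction n arbitrary: F)
  case 0 thus ?case by simp
next
  case (Suc n)
  have "(\<Sum>xs\<in>LL (Suc n). \<Sum>ys\<in>LL (Suc n). F xs ys)
      = (\<Sum>x\<in>UNIV. \<Sum>y\<in>UNIV. \<Sum>xs\<in>LL n. \<Sum>ys\<in>LL n. F (x # xs) (y # ys))"
    by (simp add: sum_LL_Suc sum.swap[of _ UNIV "LL n"])
  also have "\<dots> = (\<Sum>x\<in>UNIV. \<Sum>y\<in>UNIV. \<Sum>zs\<in>LL n. F (x # map fst zs) (y # map snd zs))"
    using Suc by simp
  also have "\<dots> = (\<Sum>z\<in>UNIV. \<Sum>zs\<in>LL n. F (fst z # map fst zs) (snd z # map snd zs))"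
    by (rule sum_pairs_UNIV)
  also have "\<dots> = (\<Sum>zs\<in>LL (Suc n). F (map fst zs) (map snd zs))"
    by (simp add: sum_LL_Suc)
  finally show ?case .
qed

lemma cover_thomas:
  fixes x y :: real
  assumes "0 \<le> x" "x \<le> 1" "0 \<le> y" "y \<le> 1"
  shows "(1 - x * y) ^ W \<le> 1 - x + exp (- y * real W)"
proof -
  have key: "((1 - x) + x * b) ^ k \<le> (1 - x) + x * b ^ k" if "0 \<le> b" "b \<le> 1" for b k
  proof (induction k)
    case (Suc k)
    have a0: "0 \<le> (1 - x) + x * b" using assms that by simp
    have "((1 - x) + x * b) ^ Suc k = ((1 - x) + x * b) * ((1 - x) + x * b) ^ k" by simp
    also have "\<dots> \<le> ((1 - x) + x * b) * ((1 - x) + x * b ^ k)"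
      by (intro mult_left_mono Suc a0)
    also have "\<dots> \<le> (1 - x) + x * b ^ Suc k"
    proof -
      have "0 \<le> b ^ k" "b ^ k \<le> 1" using that by (auto simp: power_le_one)
      hence "0 \<le> x * (1 - x) * (1 - b) * (1 - b ^ k)" using assms that by simp
      thus ?thesis by (simp add: algebra_simps)
    qed
    finally show ?case .
  qed simp
  have "(1 - x * y) ^ W = ((1 - x) + x * (1 - y)) ^ W" by (simp add: algebra_simps)
  also have "\<dots> \<le> (1 - x) + x * (1 - y) ^ W" using key assms by simp
  also have "\<dots> \<le> (1 - x) + (1 - y) ^ W"
    using assms by (simp add: mult_left_le_one_le)
  also have "(1 - y) ^ W \<le> exp (- y) ^ W"
    using assms by (intro power_mono) (auto simp: exp_ge_add_one_self[of "-y", simplified])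
  also have "exp (- y) ^ W = exp (- y * real W)"
    by (simp add: exp_of_nat_mult[symmetric] mult.commute)
  finally show ?thesis by simp
qed

lemma random_code_bound:
  fixes q :: "'b::finite \<Rightarrow> real" and \<phi> :: "'b list \<Rightarrow> real"
  assumes q0: "\<And>y. q y \<ge> 0" and q1: "(\<Sum>y\<in>UNIV. q y) = 1" and W: "W \<ge> 1"
    and phiK: "\<And>ys. ys \<in> LL n \<Longrightarrow> \<phi> ys \<le> K"
    and phiG: "\<And>ys. ys \<in> G \<Longrightarrow> \<phi> ys \<le> D'"
    and D'0: "D' \<ge> 0" and K0: "K \<ge> 0"
  shows "(\<Sum>C\<in>PiE {..<W} (\<lambda>_. LL n). (\<Prod>w<W. pw q (C w)) * Min ((\<lambda>w. \<phi> (C w)) ` {..<W}))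
         \<le> D' + K * (\<Sum>ys\<in>LL n. pw q ys * of_bool (ys \<notin> G)) ^ W"
proof -
  let ?CB = "PiE {..<W} (\<lambda>_. LL n :: 'b list set)"
  have wt0: "(\<Prod>w<W. pw q (C w)) \<ge> 0" for C by (intro prod_nonneg) (auto simp: pw_nonneg q0)
  have pt: "Min ((\<lambda>w. \<phi> (C w)) ` {..<W}) \<le> D' + K * of_bool (\<forall>w<W. C w \<notin> G)"
    if "C \<in> ?CB" for C
  proof (cases "\<exists>w<W. C w \<in> G")
    case True
    then obtain w where "w < W" "C w \<in> G" by blast
    hence "Min ((\<lambda>w. \<phi> (C w)) ` {..<W}) \<le> \<phi> (C w)" by (intro Min_le) auto
    also have "\<dots> \<le> D'" using phiG \<open>C w \<in> G\<close> by simp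
    finally show ?thesis using True by auto
  next
    case False
    have "0 < W" using W by simp
    hence "Min ((\<lambda>w. \<phi> (C w)) ` {..<W}) \<le> \<phi> (C 0)" by (intro Min_le) auto
    also have "\<dots> \<le> K" using phiK that \<open>0 < W\<close> by (auto simp: PiE_iff)
    finally show ?thesis using False D'0 by auto
  qed
  have "(\<Sum>C\<in>?CB. (\<Prod>w<W. pw q (C w)) * Min ((\<lambda>w. \<phi> (C w)) ` {..<W}))
      \<le> (\<Sum>C\<in>?CB. (\<Prod>w<W. pw q (C w)) * (D' + K * of_bool (\<forall>w<W. C w \<notin> G)))"
    by (intro sum_mono mult_left_mono pt wt0)
  also have "\<dots> = D' * (\<Sum>C\<in>?CB. (\<Prod>w<W. pw q (C w)))
      + K * (\<Sum>C\<in>?CB. (\<Prod>w<W. pw q (C w) * of_bool (C w \<notin> G)))"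
  proof -
    have "(\<Prod>w<W. pw q (C w)) * of_bool (\<forall>w<W. C w \<notin> G) = (\<Prod>w<W. pw q (C w) * of_bool (C w \<notin> G))" for C
    proof (cases "\<forall>w<W. C w \<notin> G")
      case False
      then obtain w where "w < W" "C w \<in> G" by blast
      hence "(\<Prod>w<W. pw q (C w) * of_bool (C w \<notin> G)) = 0"
        by (intro prod_zero) auto
      thus ?thesis using False by simp
    qed (simp add: prod.distrib)
    thus ?thesis by (simp add: algebra_simps sum.distrib sum_distrib_left)
  qed
  also have "(\<Sum>C\<in>?CB. (\<Prod>w<W. pw q (C w))) = (\<Prod>w<W. \<Sum>ys\<in>LL n. pw q ys)"
    by (subst prod_sum_PiE) auto
  also have "\<dots> = 1" by (simp add: sum_pw q1)
  also have "(\<Sum>C\<in>?CB. (\<Prod>w<W. pw q (C w) * of_bool (C w \<notin> G)))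
       = (\<Prod>w<W. \<Sum>ys\<in>LL n. pw q ys * of_bool (ys \<notin> G))"
    by (subst prod_sum_PiE) auto
  also have "\<dots> = (\<Sum>ys\<in>LL n. pw q ys * of_bool (ys \<notin> G)) ^ W" by simp
  finally show ?thesis by simp
qed

lemma gibbs:
  fixes p :: "'x::finite \<Rightarrow> real" and Q :: "'x \<Rightarrow> 'y::finite \<Rightarrow> real"
  assumes p0: "\<And>x. p x \<ge> 0" and p1: "(\<Sum>x\<in>UNIV. p x) = 1" and Qs: "stochastic Q"
  shows "(\<Sum>x\<in>UNIV. \<Sum>y\<in>UNIV. p x * Q x y * ln (Q x y / (\<Sum>x'\<in>UNIV. Q x' y * p x'))) \<ge> 0"
proof -
  define q where "q y = (\<Sum>x'\<in>UNIV. Q x' y * p x')" for y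
  have Q0: "Q x y \<ge> 0" for x y using Qs by (simp add: stochastic_def)
  have Q1: "(\<Sum>y\<in>UNIV. Q x y) = 1" for x using Qs by (simp add: stochastic_def)
  have qge: "q y \<ge> Q x y * p x" for x y
    unfolding q_def by (rule member_le_sum) (auto simp: Q0 p0)
  have q0: "q y \<ge> 0" for y unfolding q_def by (intro sum_nonneg) (auto simp: Q0 p0)
  have pt: "p x * Q x y * ln (Q x y / q y) \<ge> p x * Q x y - p x * q y" for x y
  proof (cases "p x * Q x y > 0")
    case True
    hence pos: "p x > 0" "Q x y > 0" using p0[of x] Q0[of x y] by (auto simp: zero_less_mult_iff)
    hence qpos: "q y > 0" using qge[of x y] by (smt (verit) mult_pos_pos)
    have "ln (q y / Q x y) \<le> q y / Q x y - 1" using qpos pos by (intro ln_le_minus_one) auto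
    hence "ln (Q x y / q y) \<ge> 1 - q y / Q x y" using qpos pos by (simp add: ln_div)
    hence "p x * Q x y * ln (Q x y / q y) \<ge> p x * Q x y * (1 - q y / Q x y)"
      using True by (intro mult_left_mono) auto
    also have "p x * Q x y * (1 - q y / Q x y) = p x * Q x y - p x * q y"
      using pos by (simp add: field_simps)
    finally show ?thesis .
  next
    case False
    moreover have "p x * Q x y \<ge> 0" using p0[of x] Q0[of x y] by simp
    ultimately have "p x * Q x y = 0" by linarith
    moreover have "p x * q y \<ge> 0" using p0[of x] q0[of y] by simp
    ultimately show ?thesis by (metis diff_le_0_iff_le mult_eq_0_iff mult_zero_left)
  qed
  have "(\<Sum>x\<in>UNIV. \<Sum>y\<in>UNIV. p x * Q x y * ln (Q x y / q y))
      \<ge> (\<Sum>x\<in>UNIV. \<Sum>y\<in>UNIV. p x * Q x y - p x * q y)"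
    by (intro sum_mono pt)
  also have "(\<Sum>x\<in>UNIV. \<Sum>y\<in>UNIV. p x * Q x y - p x * q y) = 1 - (\<Sum>y\<in>UNIV. q y)"
    by (simp add: sum_subtractf sum_distrib_left[symmetric] Q1 p1 sum_distrib_right[symmetric])
  also have "(\<Sum>y\<in>UNIV. q y) = 1"
    unfolding q_def by (subst sum.swap) (simp add: sum_distrib_right[symmetric] Q1 p1)
  finally show ?thesis by (simp add: q_def)
qed

lemma seq_distortion_pairs:
  assumes "zs \<in> LL n"
  shows "seq_distortion d (map fst zs) (map snd zs) = sum_list (map (\<lambda>(x, y). d x y) zs) / real n"
proof -
  have "sum_list (map (\<lambda>(x, y). d x y) zs) = (\<Sum>i<length zs. d (fst (zs ! i)) (snd (zs ! i)))"
    by (simp add: sum_list_sum_nth atLeast0LessThan case_prod_unfold)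
  thus ?thesis using assms by (simp add: seq_distortion_def LL_def)
qed

lemma seq_distortion_le:
  assumes "\<And>x y. d x y \<le> K" "length xs = n" "n \<ge> 1"
  shows "seq_distortion d xs ys \<le> K"
proof -
  have "(\<Sum>i<length xs. d (xs ! i) (ys ! i)) \<le> (\<Sum>i<length xs. K)" by (intro sum_mono assms)
  thus ?thesis using assms by (simp add: seq_distortion_def divide_le_eq mult.commute)
qed

lemma seq_distortion_nonneg:
  assumes "\<And>x y. d x y \<ge> 0"
  shows "seq_distortion d xs ys \<ge> 0"
  unfolding seq_distortion_def by (intro divide_nonneg_nonneg sum_nonneg assms) auto

lemma ln_pw:
  assumes "\<forall>z\<in>set zs. f z > 0"
  shows "pw f zs > 0 \<and> ln (pw f zs) = sum_list (map (\<lambda>z. ln (f z)) zs)"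
  using assms by (induction zs) (auto simp: ln_mult)

lemma pw_zip_sum:
  fixes Q :: "'x::finite \<Rightarrow> 'y::finite \<Rightarrow> real"
  assumes "\<And>x. (\<Sum>y\<in>UNIV. Q x y) = 1"
  shows "length xs = n \<Longrightarrow> (\<Sum>ys\<in>LL n. pw (\<lambda>z. Q (fst z) (snd z)) (zip xs ys)) = 1"
proof (induction xs arbitrary: n)
  case Nil thus ?case by simp
next
  case (Cons x xs)
  then obtain m where m: "n = Suc m" "length xs = m" by auto
  have "(\<Sum>ys\<in>LL n. pw (\<lambda>z. Q (fst z) (snd z)) (zip (x # xs) ys))
      = (\<Sum>y\<in>UNIV. Q x y * (\<Sum>ys\<in>LL m. pw (\<lambda>z. Q (fst z) (snd z)) (zip xs ys)))"
    by (simp add: m sum_LL_Suc sum_distrib_left)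
  also have "\<dots> = 1" using Cons.IH[OF m(2)] assms by simp
  finally show ?case .
qed

lemma pw_split:
  "pw (\<lambda>z. p (fst z) * Q (fst z) (snd z)) zs = pw p (map fst zs) * pw (\<lambda>z. Q (fst z) (snd z)) zs"
  by (induction zs) auto

lemma coding_lemma:
  fixes p :: "'x::finite \<Rightarrow> real" and Q :: "'x \<Rightarrow> 'y::finite \<Rightarrow> real" and d :: "'x \<Rightarrow> 'y \<Rightarrow> real"
  assumes p0: "\<And>x. p x \<ge> 0" and p1: "(\<Sum>x\<in>UNIV. p x) = 1" and Qs: "stochastic Q"
    and d0: "\<And>x y. d x y \<ge> 0"
    and muD: "(\<Sum>x\<in>UNIV. \<Sum>y\<in>UNIV. p x * Q x y * d x y) \<le> D"
    and MI: "(\<Sum>x\<in>UNIV. \<Sum>y\<in>UNIV. p x * Q x y * ln (Q x y / (\<Sum>x'\<in>UNIV. Q x' y * p x'))) < Rs"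
    and eps: "\<epsilon> > 0"
  shows "\<exists>n\<ge>1. \<exists>W\<ge>1. \<exists>c::nat \<Rightarrow> 'y list. (\<forall>w<W. length (c w) = n) \<and> ln (real W) / real n \<le> Rs \<and>
          (\<Sum>xs\<in>LL n. pw p xs * Min ((\<lambda>w. seq_distortion d xs (c w)) ` {..<W})) \<le> D + \<epsilon>"
proof -
  have Q0: "Q x y \<ge> 0" for x y using Qs by (simp add: stochastic_def)
  have Q1: "(\<Sum>y\<in>UNIV. Q x y) = 1" for x using Qs by (simp add: stochastic_def)
  define q where "q y = (\<Sum>x'\<in>UNIV. Q x' y * p x')" for y
  define Qc where "Qc z = Q (fst z) (snd z)" for z :: "'x \<times> 'y"
  define r where "r z = p (fst z) * Q (fst z) (snd z)" for z :: "'x \<times> 'y"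
  define dd where "dd z = d (fst z) (snd z)" for z :: "'x \<times> 'y"
  define h where "h z = ln (Q (fst z) (snd z) / q (snd z))" for z :: "'x \<times> 'y"
  define \<mu> where "\<mu> = (\<Sum>z\<in>UNIV. r z * dd z)"
  define I where "I = (\<Sum>z\<in>UNIV. r z * h z)"
  define K where "K = (\<Sum>z\<in>UNIV. dd z)"
  have q0: "q y \<ge> 0" for y unfolding q_def by (intro sum_nonneg) (auto simp: Q0 p0)
  have q1: "(\<Sum>y\<in>UNIV. q y) = 1"
    unfolding q_def by (subst sum.swap) (simp add: sum_distrib_right[symmetric] Q1 p1)
  have qge: "q y \<ge> Q x y * p x" for x y
    unfolding q_def by (rule member_le_sum) (auto simp: Q0 p0)
  have r0: "r z \<ge> 0" for z by (simp add: r_def p0 Q0)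
  have r1: "(\<Sum>z\<in>UNIV. r z) = 1"
    using sum_pairs_UNIV[of "\<lambda>x y. p x * Q x y"] by (simp add: r_def sum_distrib_left[symmetric] Q1 p1)
  have mu_eq: "\<mu> = (\<Sum>x\<in>UNIV. \<Sum>y\<in>UNIV. p x * Q x y * d x y)"
    unfolding \<mu>_def using sum_pairs_UNIV[of "\<lambda>x y. p x * Q x y * d x y"] by (simp add: r_def dd_def)
  have I_eq: "I = (\<Sum>x\<in>UNIV. \<Sum>y\<in>UNIV. p x * Q x y * ln (Q x y / (\<Sum>x'\<in>UNIV. Q x' y * p x')))"
    unfolding I_def using sum_pairs_UNIV[of "\<lambda>x y. p x * Q x y * ln (Q x y / q y)"]
    by (simp add: r_def h_def q_def)
  have I0: "I \<ge> 0" unfolding I_eq by (rule gibbs[OF p0 p1 Qs])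
  have dK: "d x y \<le> K" for x y
  proof -
    have "dd (x, y) \<le> K" unfolding K_def by (rule member_le_sum) (auto simp: dd_def d0)
    thus ?thesis by (simp add: dd_def)
  qed
  have K0: "K \<ge> 0" using dK[of undefined undefined] d0[of undefined undefined] by simp
  have mu0: "\<mu> \<ge> 0" unfolding \<mu>_def by (intro sum_nonneg) (simp add: r0 dd_def d0)
  define a where "a = (Rs - I) / 2"
  define R' where "R' = I + a"
  define \<delta> where "\<delta> = \<epsilon> / 4"
  define D' where "D' = \<mu> + \<delta>"
  have a0: "a > 0" using MI I_eq by (simp add: a_def)
  have R'0: "R' \<ge> 0" using I0 a0 by (simp add: R'_def)
  have Rs_eq: "Rs = R' + a" by (simp add: R'_def a_def)
  have d0': "\<delta> > 0" using eps by (simp add: \<delta>_def)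
  define V1 where "V1 = (\<Sum>z\<in>UNIV. r z * (dd z - \<mu>)\<^sup>2)"
  define V2 where "V2 = (\<Sum>z\<in>UNIV. r z * (h z - I)\<^sup>2)"
  have V10: "V1 \<ge> 0" unfolding V1_def by (intro sum_nonneg) (simp add: r0)
  have V20: "V2 \<ge> 0" unfolding V2_def by (intro sum_nonneg) (simp add: r0)
  define C0 where "C0 = K * (V1 / \<delta>\<^sup>2 + V2 / a\<^sup>2) + K / a"
  have C00: "C0 \<ge> 0" unfolding C0_def using K0 V10 V20 a0 by simp
  obtain n0 :: nat where n0: "2 * C0 / \<epsilon> \<le> real n0" using real_arch_simple by blast
  define n where "n = Suc n0"
  have n1: "n \<ge> 1" by (simp add: n_def)
  have npos: "real n > 0" by (simp add: n_def)
  have nC: "C0 / real n \<le> \<epsilon> / 2"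
  proof -
    have "2 * C0 / \<epsilon> \<le> real n" using n0 by (simp add: n_def)
    hence "2 * C0 \<le> real n * \<epsilon>" using eps by (simp add: divide_le_eq mult.commute)
    thus ?thesis using npos by (simp add: divide_le_eq mult.commute)
  qed
  define W where "W = nat \<lfloor>exp (real n * Rs)\<rfloor>"
  have Rs0: "Rs > 0" using Rs_eq R'0 a0 by simp
  have e1: "exp (real n * Rs) \<ge> 1" using Rs0 npos by simp
  have W1: "W \<ge> 1" unfolding W_def using e1 by (simp add: le_nat_iff one_le_floor)
  have Wle: "real W \<le> exp (real n * Rs)" unfolding W_def using e1
    by (metis exp_ge_zero floor_le_zero floor_less_cancel le_nat_iff nat_le_real_less nat_less_real_le not_le of_int_floor_le of_nat_nat order_trans zero_le_floor)
  have Wge: "real W \<ge> exp (real n * Rs) - 1" unfolding W_def using e1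
    by (smt (verit) of_int_floor_le of_nat_nat real_of_int_floor_add_one_gt zero_le_floor)
  have rate: "ln (real W) / real n \<le> Rs"
  proof -
    have "ln (real W) \<le> ln (exp (real n * Rs))" using Wle W1 by (subst ln_le_cancel_iff) auto
    hence "ln (real W) \<le> real n * Rs" by simp
    thus ?thesis using npos by (simp add: divide_le_eq mult.commute)
  qed
  define y0 where "y0 = exp (- (real n * R'))"
  define E where "E = exp (- y0 * real W)"
  have y00: "0 \<le> y0" "y0 \<le> 1" using R'0 npos by (auto simp: y0_def)
  have E_le: "E \<le> 1 / (real n * a)"
  proof -
    have "y0 * real W \<ge> y0 * (exp (real n * Rs) - 1)" using Wge y00 by (intro mult_left_mono) auto
    also have "y0 * (exp (real n * Rs) - 1) = exp (real n * a) - y0"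
      by (simp add: y0_def Rs_eq algebra_simps exp_add[symmetric] exp_diff[symmetric])
    also have "exp (real n * a) - y0 \<ge> real n * a"
      using exp_ge_add_one_self[of "real n * a"] y00 by linarith
    finally have t: "y0 * real W \<ge> real n * a" .
    have na: "real n * a > 0" using npos a0 by simp
    have "E \<le> exp (- (real n * a))" unfolding E_def using t by simp
    also have "exp (- (real n * a)) = 1 / exp (real n * a)" by (simp add: exp_minus field_simps)
    also have "\<dots> \<le> 1 / (real n * a)"
      using na exp_ge_add_one_self[of "real n * a"] by (intro divide_left_mono) (linarith, simp, simp)
    finally show ?thesis .
  qed
  define G where "G xs = {ys \<in> LL n. seq_distortion d xs ys \<le> D' \<and> pw Qc (zip xs ys) \<le> exp (real n * R') * pw q ys}" for xs
  define t where "t xs = (\<Sum>ys\<in>LL n. pw Qc (zip xs ys) * of_bool (ys \<in> G xs))" for xs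
  define CB where "CB = PiE {..<W} (\<lambda>_. LL n :: 'y list set)"
  define wt where "wt C = (\<Prod>w<W. pw q (C w))" for C :: "nat \<Rightarrow> 'y list"
  define \<Phi> where "\<Phi> C = (\<Sum>xs\<in>LL n. pw p xs * Min ((\<lambda>w. seq_distortion d xs (C w)) ` {..<W}))" for C
  have Qcsum: "(\<Sum>ys\<in>LL n. pw Qc (zip xs ys)) = 1" if "xs \<in> LL n" for xs
    using pw_zip_sum[of Q xs n] Q1 that by (simp add: Qc_def[abs_def] LL_def)
  have Qc0: "Qc z \<ge> 0" for z by (simp add: Qc_def Q0)
  have D'0: "D' \<ge> 0" using mu0 d0' by (simp add: D'_def)
  have F_bound: "(\<Sum>C\<in>CB. wt C * Min ((\<lambda>w. seq_distortion d xs (C w)) ` {..<W}))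
        \<le> D' + K * (1 - t xs + E)" if xs: "xs \<in> LL n" for xs
  proof -
    have "(\<Sum>C\<in>CB. wt C * Min ((\<lambda>w. seq_distortion d xs (C w)) ` {..<W}))
        \<le> D' + K * (\<Sum>ys\<in>LL n. pw q ys * of_bool (ys \<notin> G xs)) ^ W"
      unfolding CB_def wt_def
      by (rule random_code_bound[OF q0 q1 W1 _ _ D'0 K0])
         (use xs n1 in \<open>auto simp: G_def LL_def intro: seq_distortion_le dK\<close>)
    also have "(\<Sum>ys\<in>LL n. pw q ys * of_bool (ys \<notin> G xs)) ^ W \<le> 1 - t xs + E"
    proof -
      define qG where "qG = (\<Sum>ys\<in>LL n. pw q ys * of_bool (ys \<in> G xs))"
      have B: "(\<Sum>ys\<in>LL n. pw q ys * of_bool (ys \<notin> G xs)) = 1 - qG"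
      proof -
        have "(\<Sum>ys\<in>LL n. pw q ys * of_bool (ys \<notin> G xs)) = (\<Sum>ys\<in>LL n. pw q ys - pw q ys * of_bool (ys \<in> G xs))"
          by (intro sum.cong) auto
        thus ?thesis by (simp add: sum_subtractf qG_def sum_pw q1)
      qed
      have qG1: "qG \<le> 1"
      proof -
        have "qG \<le> (\<Sum>ys\<in>LL n. pw q ys)" unfolding qG_def
          by (intro sum_mono) (auto simp: pw_nonneg q0)
        thus ?thesis by (simp add: sum_pw q1)
      qed
      have qGt: "y0 * t xs \<le> qG"
        unfolding qG_def t_def sum_distrib_left
      proof (intro sum_mono)
        fix ys :: "'y list" assume "ys \<in> LL n"
        show "y0 * (pw Qc (zip xs ys) * of_bool (ys \<in> G xs)) \<le> pw q ys * of_bool (ys \<in> G xs)"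
        proof (cases "ys \<in> G xs")
          case True
          hence "pw Qc (zip xs ys) \<le> exp (real n * R') * pw q ys" by (simp add: G_def)
          hence "y0 * pw Qc (zip xs ys) \<le> y0 * (exp (real n * R') * pw q ys)"
            using y00 by (intro mult_left_mono) auto
          also have "\<dots> = pw q ys" by (simp add: y0_def exp_minus field_simps)
          finally show ?thesis using True by simp
        qed simp
      qed
      have t0: "0 \<le> t xs" unfolding t_def by (intro sum_nonneg) (auto simp: pw_nonneg Qc0)
      have t1: "t xs \<le> 1"
      proof -
        have "t xs \<le> (\<Sum>ys\<in>LL n. pw Qc (zip xs ys))" unfolding t_def
          by (intro sum_mono) (auto simp: pw_nonneg Qc0)
        thus ?thesis using Qcsum[OF xs] by simp
      qed
      have "(1 - qG) ^ W \<le> (1 - t xs * y0) ^ W"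
        using qG1 qGt by (intro power_mono) (auto simp: mult.commute)
      also have "\<dots> \<le> 1 - t xs + E" unfolding E_def
        by (rule cover_thomas) (use t0 t1 y00 in auto)
      finally show ?thesis using B by simp
    qed
    hence "K * (\<Sum>ys\<in>LL n. pw q ys * of_bool (ys \<notin> G xs)) ^ W \<le> K * (1 - t xs + E)"
      using K0 by (intro mult_left_mono)
    finally show ?thesis by simp
  qed
  have bad: "1 - (\<Sum>xs\<in>LL n. pw p xs * t xs) \<le> V1 / (real n * \<delta>\<^sup>2) + V2 / (real n * a\<^sup>2)"
  proof -
    have "1 - (\<Sum>xs\<in>LL n. pw p xs * t xs) = (\<Sum>xs\<in>LL n. pw p xs * (1 - t xs))"
      by (simp add: right_diff_distrib sum_subtractf sum_pw p1)
    also have "\<dots> = (\<Sum>xs\<in>LL n. \<Sum>ys\<in>LL n. pw p xs * pw Qc (zip xs ys) * of_bool (ys \<notin> G xs))"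
    proof (intro sum.cong refl)
      fix xs :: "'x list" assume xs: "xs \<in> LL n"
      have "1 - t xs = (\<Sum>ys\<in>LL n. pw Qc (zip xs ys) - pw Qc (zip xs ys) * of_bool (ys \<in> G xs))"
        by (simp add: sum_subtractf Qcsum[OF xs] t_def)
      also have "\<dots> = (\<Sum>ys\<in>LL n. pw Qc (zip xs ys) * of_bool (ys \<notin> G xs))"
        by (intro sum.cong) auto
      finally show "pw p xs * (1 - t xs) = (\<Sum>ys\<in>LL n. pw p xs * pw Qc (zip xs ys) * of_bool (ys \<notin> G xs))"
        by (simp only: sum_distrib_left mult.assoc)
    qed
    also have "\<dots> = (\<Sum>zs\<in>LL n. pw r zs * of_bool (map snd zs \<notin> G (map fst zs)))"
    proof (subst sum_LL_pairs, intro sum.cong refl)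
      fix zs :: "('x \<times> 'y) list"
      have "pw r zs = pw p (map fst zs) * pw Qc zs"
        using pw_split[of p Q zs] unfolding r_def[abs_def] Qc_def[abs_def] by simp
      thus "pw p (map fst zs) * pw Qc (zip (map fst zs) (map snd zs)) * of_bool (map snd zs \<notin> G (map fst zs))
          = pw r zs * of_bool (map snd zs \<notin> G (map fst zs))"
        by (simp only: zip_map_fst_snd)
    qed
    also have "\<dots> \<le> (\<Sum>zs\<in>LL n. pw r zs * of_bool (sum_list (map dd zs) > real n * (\<mu> + \<delta>))
                     + pw r zs * of_bool (sum_list (map h zs) > real n * (I + a)))"
    proof (intro sum_mono)
      fix zs :: "('x \<times> 'y) list" assume zs: "zs \<in> LL n"
      show "pw r zs * of_bool (map snd zs \<notin> G (map fst zs))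
          \<le> pw r zs * of_bool (sum_list (map dd zs) > real n * (\<mu> + \<delta>))
            + pw r zs * of_bool (sum_list (map h zs) > real n * (I + a))"
      proof (cases "pw r zs > 0 \<and> map snd zs \<notin> G (map fst zs)")
        case False
        moreover have "pw r zs \<ge> 0" by (simp add: pw_nonneg r0)
        ultimately have "pw r zs * of_bool (map snd zs \<notin> G (map fst zs)) = 0" by auto
        moreover have "0 \<le> pw r zs * of_bool (sum_list (map dd zs) > real n * (\<mu> + \<delta>))
            + pw r zs * of_bool (sum_list (map h zs) > real n * (I + a))"
          using \<open>pw r zs \<ge> 0\<close> by simp
        ultimately show ?thesis by linarith
      next
        case True
        have allpos: "\<forall>z\<in>set zs. r z > 0"
        proof
          fix z assume "z \<in> set zs"
          have "pw r zs \<noteq> 0" using True by simp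
          hence "0 \<notin> set (map r zs)" by (simp add: pw_def prod_list_zero_iff)
          thus "r z > 0" using \<open>z \<in> set zs\<close> r0[of z] by force
        qed
        have zpos: "Qc z > 0 \<and> q (snd z) > 0" if "z \<in> set zs" for z
        proof -
          have "p (fst z) * Q (fst z) (snd z) > 0" using allpos that by (simp add: r_def)
          hence "p (fst z) > 0" "Q (fst z) (snd z) > 0"
            using p0[of "fst z"] Q0[of "fst z" "snd z"] by (auto simp: zero_less_mult_iff)
          moreover have "q (snd z) \<ge> Q (fst z) (snd z) * p (fst z)" by (rule qge)
          ultimately show ?thesis by (smt (verit) Qc_def mult_pos_pos)
        qed
        have "map snd zs \<in> LL n" using zs by (simp add: LL_def)
        hence "\<not> seq_distortion d (map fst zs) (map snd zs) \<le> D'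
             \<or> \<not> pw Qc zs \<le> exp (real n * R') * pw q (map snd zs)"
          using True by (simp add: G_def zip_map_fst_snd)
        hence "sum_list (map dd zs) > real n * (\<mu> + \<delta>) \<or> sum_list (map h zs) > real n * (I + a)"
        proof
          assume "\<not> seq_distortion d (map fst zs) (map snd zs) \<le> D'"
          hence "sum_list (map dd zs) / real n > D'"
            using seq_distortion_pairs[OF zs, of d] by (simp add: dd_def[abs_def] case_prod_unfold)
          hence "sum_list (map dd zs) > real n * D'" using npos by (simp add: field_simps)
          thus ?thesis by (simp add: D'_def)
        next
          assume A: "\<not> pw Qc zs \<le> exp (real n * R') * pw q (map snd zs)"
          have l1: "pw Qc zs > 0 \<and> ln (pw Qc zs) = sum_list (map (\<lambda>z. ln (Qc z)) zs)"
            by (rule ln_pw) (use zpos in auto)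
          have l2: "pw (\<lambda>z. q (snd z)) zs > 0 \<and> ln (pw (\<lambda>z. q (snd z)) zs) = sum_list (map (\<lambda>z. ln (q (snd z))) zs)"
            by (rule ln_pw) (use zpos in auto)
          have pq: "pw q (map snd zs) = pw (\<lambda>z. q (snd z)) zs" by (simp add: pw_def comp_def)
          have hs: "sum_list (map h zs) = sum_list (map (\<lambda>z. ln (Qc z)) zs) - sum_list (map (\<lambda>z. ln (q (snd z))) zs)"
          proof -
            have "sum_list (map h zs) = sum_list (map (\<lambda>z. ln (Qc z) - ln (q (snd z))) zs)"
            proof (intro arg_cong[where f = sum_list] map_cong refl)
              fix z assume "z \<in> set zs"
              from zpos[OF this] show "h z = ln (Qc z) - ln (q (snd z))"
                unfolding h_def Qc_def by (simp add: ln_div)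
            qed
            thus ?thesis by (simp add: sum_list_subtractf)
          qed
          have "exp (real n * R') * pw q (map snd zs) < pw Qc zs" using A by simp
          hence "ln (exp (real n * R') * pw q (map snd zs)) < ln (pw Qc zs)"
            using l1 l2 pq by (subst ln_less_cancel_iff) auto
          hence "real n * R' + ln (pw q (map snd zs)) < ln (pw Qc zs)"
            using l2 pq by (simp add: ln_mult)
          moreover have "ln (pw Qc zs) = sum_list (map (\<lambda>z. ln (Qc z)) zs)" using l1 by blast
          moreover have "ln (pw q (map snd zs)) = sum_list (map (\<lambda>z. ln (q (snd z))) zs)" using l2 pq by simp
          ultimately have "sum_list (map h zs) > real n * R'" using hs by linarith
          thus ?thesis by (simp add: R'_def)
        qed
        hence "of_bool (map snd zs \<notin> G (map fst zs)) \<le>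
               of_bool (sum_list (map dd zs) > real n * (\<mu> + \<delta>)) + (of_bool (sum_list (map h zs) > real n * (I + a)) :: real)"
          by (cases "sum_list (map dd zs) > real n * (\<mu> + \<delta>)"; cases "sum_list (map h zs) > real n * (I + a)") simp_all
        hence "pw r zs * of_bool (map snd zs \<notin> G (map fst zs)) \<le>
               pw r zs * (of_bool (sum_list (map dd zs) > real n * (\<mu> + \<delta>)) + of_bool (sum_list (map h zs) > real n * (I + a)))"
          using True by (intro mult_left_mono) simp_all
        thus ?thesis by (simp add: algebra_simps)
      qed
    qed
    also have "\<dots> \<le> V1 / (real n * \<delta>\<^sup>2) + V2 / (real n * a\<^sup>2)"
      unfolding sum.distrib
      using chebyshev_LL[OF r0 r1 d0' n1, of dd] chebyshev_LL[OF r0 r1 a0 n1, of h]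
      by (simp add: V1_def V2_def \<mu>_def I_def)
    finally show ?thesis .
  qed
  have wt0: "wt C \<ge> 0" for C unfolding wt_def by (intro prod_nonneg) (auto simp: pw_nonneg q0)
  have wt1: "(\<Sum>C\<in>CB. wt C) = 1"
    unfolding CB_def wt_def by (subst prod_sum_PiE[symmetric]) (auto simp: sum_pw q1)
  have finCB: "finite CB" unfolding CB_def by (intro finite_PiE) auto
  have neCB: "CB \<noteq> {}" unfolding CB_def
    by (subst PiE_eq_empty_iff) (auto simp: LL_def intro!: exI[of _ "replicate n undefined"])
  have avg: "(\<Sum>C\<in>CB. wt C * \<Phi> C) \<le> D + \<epsilon>"
  proof -
    have "(\<Sum>C\<in>CB. wt C * \<Phi> C)
        = (\<Sum>xs\<in>LL n. pw p xs * (\<Sum>C\<in>CB. wt C * Min ((\<lambda>w. seq_distortion d xs (C w)) ` {..<W})))"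
    proof -
      have "(\<Sum>C\<in>CB. wt C * \<Phi> C) = (\<Sum>C\<in>CB. \<Sum>xs\<in>LL n. pw p xs * (wt C * Min ((\<lambda>w. seq_distortion d xs (C w)) ` {..<W})))"
        unfolding \<Phi>_def by (simp only: sum_distrib_left mult.left_commute)
      also have "\<dots> = (\<Sum>xs\<in>LL n. \<Sum>C\<in>CB. pw p xs * (wt C * Min ((\<lambda>w. seq_distortion d xs (C w)) ` {..<W})))"
        by (rule sum.swap)
      also have "\<dots> = (\<Sum>xs\<in>LL n. pw p xs * (\<Sum>C\<in>CB. wt C * Min ((\<lambda>w. seq_distortion d xs (C w)) ` {..<W})))"
        by (simp only: sum_distrib_left)
      finally show ?thesis .
    qed
    also have "\<dots> \<le> (\<Sum>xs\<in>LL n. pw p xs * (D' + K * (1 - t xs + E)))"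
      by (intro sum_mono mult_left_mono F_bound) (auto simp: pw_nonneg p0)
    also have "\<dots> = D' + K * E + K * (1 - (\<Sum>xs\<in>LL n. pw p xs * t xs))"
    proof -
      have "(\<Sum>xs\<in>LL n. pw p xs * (D' + K * (1 - t xs + E)))
          = (\<Sum>xs\<in>LL n. (D' + K * E + K) * pw p xs - K * (pw p xs * t xs))"
        by (intro sum.cong refl) (simp add: algebra_simps)
      also have "\<dots> = (D' + K * E + K) * (\<Sum>xs\<in>LL n. pw p xs) - K * (\<Sum>xs\<in>LL n. pw p xs * t xs)"
        by (simp only: sum_subtractf sum_distrib_left)
      also have "\<dots> = D' + K * E + K * (1 - (\<Sum>xs\<in>LL n. pw p xs * t xs))"
        by (simp add: sum_pw p1 algebra_simps)
      finally show ?thesis .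
    qed
    also have "\<dots> \<le> D' + K * (1 / (real n * a)) + K * (V1 / (real n * \<delta>\<^sup>2) + V2 / (real n * a\<^sup>2))"
      using E_le bad K0 by (intro add_mono mult_left_mono) auto
    also have "\<dots> = D' + C0 / real n"
      using a0 npos d0' by (simp add: C0_def field_simps)
    also have "\<dots> \<le> D + \<epsilon>" using nC muD mu_eq eps unfolding D'_def \<delta>_def by linarith
    finally show ?thesis .
  qed
  obtain C where C: "C \<in> CB" "\<forall>C'\<in>CB. \<Phi> C \<le> \<Phi> C'"
  proof -
    have "Min (\<Phi> ` CB) \<in> \<Phi> ` CB" using finCB neCB by simp
    then obtain C where "C \<in> CB" "\<Phi> C = Min (\<Phi> ` CB)" by force
    moreover have "\<forall>C'\<in>CB. Min (\<Phi> ` CB) \<le> \<Phi> C'" using finCB by simp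
    ultimately show ?thesis using that by auto
  qed
  have "\<Phi> C = (\<Sum>C'\<in>CB. wt C' * \<Phi> C)" by (simp add: sum_distrib_right[symmetric] wt1)
  also have "\<dots> \<le> (\<Sum>C'\<in>CB. wt C' * \<Phi> C')" using C(2) by (intro sum_mono mult_left_mono wt0) auto
  also have "\<dots> \<le> D + \<epsilon>" by (rule avg)
  finally have "\<Phi> C \<le> D + \<epsilon>" .
  moreover have "\<forall>w<W. length (C w) = n" using C(1) by (auto simp: CB_def LL_def PiE_iff)
  ultimately show ?thesis using n1 W1 rate unfolding \<Phi>_def by blast
qed

definition nice :: "'o measure \<Rightarrow> ('o \<Rightarrow> real) \<Rightarrow> bool" where
  "nice M f \<longleftrightarrow> f \<in> borel_measurable M \<and> (\<exists>B. \<forall>\<omega>\<in>space M. \<bar>f \<omega>\<bar> \<le> B)"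

lemma Xvec_Suc: "Xvec X (Suc n) \<omega> = Xvec X n \<omega> @ [X n \<omega>]"
  by (simp add: Xvec_def)

lemma length_Xvec[simp]: "length (Xvec X n \<omega>) = n"
  by (simp add: Xvec_def)

lemma meas_Xvec:
  fixes X :: "nat \<Rightarrow> 'o \<Rightarrow> 'x::finite"
  assumes "\<forall>i. X i \<in> measurable M (count_space UNIV)"
  shows "Xvec X n \<in> measurable M (count_space UNIV)"
proof -
  have pre: "{\<omega> \<in> space M. X i \<omega> = c} \<in> sets M" for i c
  proof -
    have "X i -` {c} \<inter> space M \<in> sets M" using assms by (intro measurable_sets) auto
    moreover have "X i -` {c} \<inter> space M = {\<omega> \<in> space M. X i \<omega> = c}" by auto
    ultimately show ?thesis by simp
  qed
  have "Xvec X n -` {xs} \<inter> space M \<in> sets M" for xs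
  proof -
    have e1: "(Xvec X n \<omega> = xs) = (length xs = n \<and> (\<forall>i<n. X i \<omega> = xs ! i))" for \<omega>
      unfolding Xvec_def list_eq_iff_nth_eq by auto
    have eq: "Xvec X n -` {xs} \<inter> space M = {\<omega> \<in> space M. length xs = n \<and> (\<forall>i<n. X i \<omega> = xs ! i)}"
      using e1 by blast
    show ?thesis unfolding eq
    proof (cases "length xs = n")
      case True
      thus "{\<omega> \<in> space M. length xs = n \<and> (\<forall>i<n. X i \<omega> = xs ! i)} \<in> sets M"
        using pre by simp
    qed simp
  qed
  thus ?thesis by (subst measurable_count_space_eq2_countable) simp_all
qed

lemma nice_Xvec:
  fixes X :: "nat \<Rightarrow> 'o \<Rightarrow> 'x::finite"
  assumes "\<forall>i. X i \<in> measurable M (count_space UNIV)"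
  shows "nice M (\<lambda>\<omega>. \<psi> (Xvec X n \<omega>))"
  unfolding nice_def
proof
  show "(\<lambda>\<omega>. \<psi> (Xvec X n \<omega>)) \<in> borel_measurable M"
    by (rule measurable_compose[OF meas_Xvec[OF assms]]) simp
  have "\<bar>\<psi> (Xvec X n \<omega>)\<bar> \<le> (\<Sum>xs\<in>LL n. \<bar>\<psi> xs\<bar>)" for \<omega>
    using finite_LL[of n] by (intro member_le_sum[of _ _ "\<lambda>xs. \<bar>\<psi> xs\<bar>"]) (auto simp: LL_def)
  thus "\<exists>B. \<forall>\<omega>\<in>space M. \<bar>\<psi> (Xvec X n \<omega>)\<bar> \<le> B" by blast
qed

lemma nice_X:
  fixes X :: "nat \<Rightarrow> 'o \<Rightarrow> 'x::finite"
  assumes "\<forall>i. X i \<in> measurable M (count_space UNIV)"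
  shows "nice M (\<lambda>\<omega>. \<phi> (X i \<omega>))"
  unfolding nice_def
proof
  show "(\<lambda>\<omega>. \<phi> (X i \<omega>)) \<in> borel_measurable M"
    by (rule measurable_compose[of _ _ "count_space UNIV"]) (use assms in auto)
  have "\<bar>\<phi> (X i \<omega>)\<bar> \<le> (\<Sum>x\<in>UNIV. \<bar>\<phi> x\<bar>)" for \<omega>
    by (rule member_le_sum[of _ _ "\<lambda>x. \<bar>\<phi> x\<bar>"]) auto
  thus "\<exists>B. \<forall>\<omega>\<in>space M. \<bar>\<phi> (X i \<omega>)\<bar> \<le> B" by blast
qed

locale sle =
  fixes M :: "'o measure" and \<Theta> :: "'t set" and P :: "'t \<Rightarrow> 'o measure"
  assumes ne: "\<Theta> \<noteq> {}"
    and ps: "\<And>\<theta>. \<theta> \<in> \<Theta> \<Longrightarrow> prob_space (P \<theta>)"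
    and sets_eq: "\<And>\<theta>. \<theta> \<in> \<Theta> \<Longrightarrow> sets (P \<theta>) = sets M"
    and space_eq: "\<And>\<theta>. \<theta> \<in> \<Theta> \<Longrightarrow> space (P \<theta>) = space M"
begin

lemma nice_int:
  assumes "nice M f" "\<theta> \<in> \<Theta>"
  shows "integrable (P \<theta>) f"
proof -
  obtain B where B: "\<forall>\<omega>\<in>space M. \<bar>f \<omega>\<bar> \<le> B" and m: "f \<in> borel_measurable M"
    using assms(1) by (auto simp: nice_def)
  interpret prob_space "P \<theta>" using ps assms(2) .
  have mt: "f \<in> borel_measurable (P \<theta>)"
    using m measurable_cong_sets[OF sets_eq[OF assms(2)] refl] by blast
  show ?thesis
    by (rule integrable_const_bound[where B=B]) (use B mt space_eq[OF assms(2)] in auto)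
qed

lemma nice_bdd:
  assumes "nice M f"
  shows "bdd_above ((\<lambda>\<theta>. \<integral>\<omega>. f \<omega> \<partial>P \<theta>) ` \<Theta>)"
proof -
  obtain B where B: "\<forall>\<omega>\<in>space M. \<bar>f \<omega>\<bar> \<le> B"
    using assms(1) by (auto simp: nice_def)
  have "(\<integral>\<omega>. f \<omega> \<partial>P \<theta>) \<le> B" if th: "\<theta> \<in> \<Theta>" for \<theta>
  proof -
    interpret prob_space "P \<theta>" using ps th .
    have "(\<integral>\<omega>. f \<omega> \<partial>P \<theta>) \<le> (\<integral>\<omega>. B \<partial>P \<theta>)"
      by (rule integral_mono) (use nice_int[OF assms th] B space_eq[OF th] in auto)
    also have "\<dots> = B" by (simp add: prob_space)
    finally show ?thesis .
  qed
  thus ?thesis by (auto simp: bdd_above_def)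
qed

lemma nice_bdd_below:
  assumes "nice M f"
  shows "bdd_below ((\<lambda>\<theta>. \<integral>\<omega>. f \<omega> \<partial>P \<theta>) ` \<Theta>)"
proof -
  obtain B where B: "\<forall>\<omega>\<in>space M. \<bar>f \<omega>\<bar> \<le> B"
    using assms(1) by (auto simp: nice_def)
  have "(\<integral>\<omega>. f \<omega> \<partial>P \<theta>) \<ge> -B" if th: "\<theta> \<in> \<Theta>" for \<theta>
  proof -
    interpret prob_space "P \<theta>" using ps th .
    have "(\<integral>\<omega>. f \<omega> \<partial>P \<theta>) \<ge> (\<integral>\<omega>. -B \<partial>P \<theta>)"
      by (rule integral_mono) (use nice_int[OF assms th] B space_eq[OF th] in \<open>auto simp: abs_le_iff\<close>)
    also have "(\<integral>\<omega>. -B \<partial>P \<theta>) = -B" by (simp add: prob_space)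
    finally show ?thesis .
  qed
  thus ?thesis by (auto simp: bdd_below_def)
qed

lemma sub_exp_ge:
  assumes "nice M f" "\<theta> \<in> \<Theta>"
  shows "(\<integral>\<omega>. f \<omega> \<partial>P \<theta>) \<le> sub_exp \<Theta> P f"
  unfolding sub_exp_def by (rule cSUP_upper[OF assms(2) nice_bdd[OF assms(1)]])

lemma sub_exp_mono:
  assumes "nice M f" "nice M g" "\<And>\<omega>. \<omega> \<in> space M \<Longrightarrow> f \<omega> \<le> g \<omega>"
  shows "sub_exp \<Theta> P f \<le> sub_exp \<Theta> P g"
  unfolding sub_exp_def
proof (rule cSUP_mono[OF ne nice_bdd[OF assms(2)]])
  fix \<theta> assume th: "\<theta> \<in> \<Theta>"
  have "(\<integral>\<omega>. f \<omega> \<partial>P \<theta>) \<le> (\<integral>\<omega>. g \<omega> \<partial>P \<theta>)"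
    by (rule integral_mono) (use nice_int[OF assms(1) th] nice_int[OF assms(2) th] assms(3) space_eq[OF th] in auto)
  thus "\<exists>\<theta>'\<in>\<Theta>. (\<integral>\<omega>. f \<omega> \<partial>P \<theta>) \<le> (\<integral>\<omega>. g \<omega> \<partial>P \<theta>')" using th by blast
qed

lemma sub_exp_const: "sub_exp \<Theta> P (\<lambda>_. c) = c"
proof -
  have "(\<integral>\<omega>. c \<partial>P \<theta>) = c" if "\<theta> \<in> \<Theta>" for \<theta>
  proof -
    interpret prob_space "P \<theta>" using ps that .
    show ?thesis by (simp add: prob_space)
  qed
  hence "sub_exp \<Theta> P (\<lambda>_. c) = (SUP \<theta>\<in>\<Theta>. c)" unfolding sub_exp_def
    by (intro SUP_cong) auto
  also have "\<dots> = c" using ne by simp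
  finally show ?thesis .
qed

lemma integral_X0:
  fixes X :: "nat \<Rightarrow> 'o \<Rightarrow> 'x::finite"
  assumes X: "\<forall>i. X i \<in> measurable M (count_space UNIV)" and th: "\<theta> \<in> \<Theta>"
  shows "(\<integral>\<omega>. \<phi> (X 0 \<omega>) \<partial>P \<theta>) = (\<Sum>x\<in>UNIV. pdist P X \<theta> x * \<phi> x)"
proof -
  interpret prob_space "P \<theta>" using ps th .
  define A where "A x = {\<omega> \<in> space (P \<theta>). X 0 \<omega> = x}" for x
  have As: "A x \<in> sets (P \<theta>)" for x
  proof -
    have "X 0 -` {x} \<inter> space M \<in> sets M" using X by (intro measurable_sets) auto
    moreover have "X 0 -` {x} \<inter> space M = A x" by (auto simp: A_def space_eq[OF th])
    ultimately show ?thesis using sets_eq[OF th] by simp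
  qed
  have "(\<integral>\<omega>. \<phi> (X 0 \<omega>) \<partial>P \<theta>) = (\<integral>\<omega>. (\<Sum>x\<in>UNIV. \<phi> x * indicator (A x) \<omega>) \<partial>P \<theta>)"
  proof (rule Bochner_Integration.integral_cong[OF refl])
    fix \<omega> assume "\<omega> \<in> space (P \<theta>)"
    hence "(\<Sum>x\<in>UNIV. \<phi> x * indicator (A x) \<omega>) = (\<Sum>x\<in>{X 0 \<omega>}. \<phi> x * indicator (A x) \<omega>)"
      by (intro sum.mono_neutral_right) (auto simp: A_def)
    also have "\<dots> = \<phi> (X 0 \<omega>)" using \<open>\<omega> \<in> space (P \<theta>)\<close> by (simp add: A_def)
    finally show "\<phi> (X 0 \<omega>) = (\<Sum>x\<in>UNIV. \<phi> x * indicator (A x) \<omega>)" by simp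
  qed
  also have "\<dots> = (\<Sum>x\<in>UNIV. \<integral>\<omega>. \<phi> x * indicator (A x) \<omega> \<partial>P \<theta>)"
    by (rule Bochner_Integration.integral_sum) (auto intro!: integrable_mult_right integrable_real_indicator As simp: emeasure_eq_measure)
  also have "\<dots> = (\<Sum>x\<in>UNIV. pdist P X \<theta> x * \<phi> x)"
    using As by (simp add: pdist_def A_def sets.Int_space_eq2 mult.commute)
  finally show ?thesis .
qed

lemma reduction:
  fixes X :: "nat \<Rightarrow> 'o \<Rightarrow> 'x::finite"
  assumes X: "\<forall>i. X i \<in> measurable M (count_space UNIV)" and iid: "iid_source \<Theta> P X"
    and th: "\<theta>0 \<in> \<Theta>"
  shows "(\<Sum>xs\<in>LL n. pw (pdist P X \<theta>0) xs * \<psi> xs) \<le> sub_exp \<Theta> P (\<lambda>\<omega>. \<psi> (Xvec X n \<omega>))"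
proof (induction n arbitrary: \<psi>)
  case 0
  have "Xvec X 0 \<omega> = []" for \<omega> by (simp add: Xvec_def)
  thus ?case by (simp add: sub_exp_const)
next
  case (Suc n)
  define p where "p = pdist P X \<theta>0"
  define \<psi>1 where "\<psi>1 xs = sub_exp \<Theta> P (\<lambda>\<omega>'. \<psi> (xs @ [X n \<omega>']))" for xs
  define \<psi>2 where "\<psi>2 xs = (\<Sum>x\<in>UNIV. p x * \<psi> (xs @ [x]))" for xs
  have iid1: "sub_exp \<Theta> P (\<lambda>\<omega>. \<phi> (X i \<omega>)) = sub_exp \<Theta> P (\<lambda>\<omega>. \<phi> (X j \<omega>))" for i j and \<phi> :: "'x \<Rightarrow> real"
    using iid unfolding iid_source_def by blast
  have iid2: "sub_exp \<Theta> P (\<lambda>\<omega>. \<phi> (Xvec X (Suc n) \<omega>)) =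
        sub_exp \<Theta> P (\<lambda>\<omega>. sub_exp \<Theta> P (\<lambda>\<omega>'. \<phi> (Xvec X n \<omega> @ [X n \<omega>'])))" for \<phi> :: "'x list \<Rightarrow> real"
    using iid unfolding iid_source_def by (metis diff_Suc_1 le_add1 plus_1_eq_Suc)
  have le12: "\<psi>2 xs \<le> \<psi>1 xs" for xs
  proof -
    have "\<psi>1 xs = sub_exp \<Theta> P (\<lambda>\<omega>'. (\<lambda>x. \<psi> (xs @ [x])) (X 0 \<omega>'))"
      unfolding \<psi>1_def using iid1[of "\<lambda>x. \<psi> (xs @ [x])" n 0] by simp
    also have "\<dots> \<ge> (\<integral>\<omega>'. (\<lambda>x. \<psi> (xs @ [x])) (X 0 \<omega>') \<partial>P \<theta>0)"
      by (rule sub_exp_ge[OF nice_X[OF X] th])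
    also have "(\<integral>\<omega>'. (\<lambda>x. \<psi> (xs @ [x])) (X 0 \<omega>') \<partial>P \<theta>0) = \<psi>2 xs"
      unfolding \<psi>2_def p_def by (rule integral_X0[OF X th])
    finally show ?thesis .
  qed
  have "(\<Sum>xs\<in>LL (Suc n). pw p xs * \<psi> xs) = (\<Sum>xs\<in>LL n. pw p xs * \<psi>2 xs)"
    by (simp add: sum_LL_snoc \<psi>2_def sum_distrib_left mult.assoc)
  also have "\<dots> \<le> sub_exp \<Theta> P (\<lambda>\<omega>. \<psi>2 (Xvec X n \<omega>))"
    unfolding p_def by (rule Suc.IH)
  also have "\<dots> \<le> sub_exp \<Theta> P (\<lambda>\<omega>. \<psi>1 (Xvec X n \<omega>))"
    by (rule sub_exp_mono[OF nice_Xvec[OF X] nice_Xvec[OF X]]) (rule le12)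
  also have "\<dots> = sub_exp \<Theta> P (\<lambda>\<omega>. \<psi> (Xvec X (Suc n) \<omega>))"
    unfolding \<psi>1_def by (rule iid2[symmetric])
  finally show ?case unfolding p_def .
qed

end

lemma mi_term:
  fixes p :: "'x::finite \<Rightarrow> real" and Q :: "'x \<Rightarrow> 'y::finite \<Rightarrow> real"
  assumes p0: "\<And>x. p x \<ge> 0" and Q0: "\<And>x y. Q x y \<ge> 0"
  shows "p x * Q x y * ln (Q x y / (\<Sum>x'\<in>UNIV. Q x' y * p x')) \<le> Q x y"
proof -
  define q where "q = (\<Sum>x'\<in>UNIV. Q x' y * p x')"
  have qge: "q \<ge> Q x y * p x" unfolding q_def by (rule member_le_sum) (auto simp: Q0 p0)
  show ?thesis
  proof (cases "p x * Q x y > 0")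
    case True
    hence pos: "p x > 0" "Q x y > 0" using p0[of x] Q0[of x y] by (auto simp: zero_less_mult_iff)
    hence qpos: "q > 0" using qge by (smt (verit) mult_pos_pos)
    have "ln (Q x y / q) \<le> Q x y / q - 1" using pos qpos by (intro ln_le_minus_one) auto
    hence "ln (Q x y / q) \<le> Q x y / q" by simp
    hence "p x * Q x y * ln (Q x y / q) \<le> p x * Q x y * (Q x y / q)"
      using True by (intro mult_left_mono) auto
    also have "\<dots> = Q x y * ((Q x y * p x) / q)" by (simp add: field_simps)
    also have "\<dots> \<le> Q x y * 1"
      using qge qpos pos by (intro mult_left_mono) (auto simp: divide_le_eq)
    finally show ?thesis by (simp add: q_def)
  next
    case False
    moreover have "p x * Q x y \<ge> 0" using p0[of x] Q0[of x y] by simp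
    ultimately have z: "p x * Q x y = 0" by linarith
    have "p x * Q x y * ln (Q x y / (\<Sum>x'\<in>UNIV. Q x' y * p x')) = 0" by (simp only: z mult_zero_left)
    thus ?thesis using Q0[of x y] by linarith
  qed
qed

theorem theorem14:
  fixes M :: "'o measure" and H :: "('o \<Rightarrow> real) set" and \<Theta> :: "'t set"
    and P :: "'t \<Rightarrow> 'o measure" and X :: "nat \<Rightarrow> 'o \<Rightarrow> 'x::finite"
    and d :: "'x \<Rightarrow> 'y::finite \<Rightarrow> real" and D Rs \<epsilon> :: real
  assumes "sublinear_expectation_space M H \<Theta> P"
    and "countably_dim_weakly_compact H \<Theta> P"
    and "\<forall>i. X i \<in> measurable M (count_space UNIV)"
    and "\<forall>i (\<phi>::'x \<Rightarrow> real). (\<lambda>\<omega>. \<phi> (X i \<omega>)) \<in> H"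
    and "iid_source \<Theta> P X"
    and "\<forall>x y. d x y \<ge> 0"
    and "ereal Rs > rate_distortion \<Theta> (pdist P X) d D"
    and "\<epsilon> > 0"
  shows "\<exists>n::nat. n \<ge> 1 \<and>
           (\<exists>(W::nat) (f::'x list \<Rightarrow> nat) (g::nat \<Rightarrow> 'y list).
              W \<ge> 1 \<and>
              (\<forall>xs. length xs = n \<longrightarrow> f xs < W) \<and>
              (\<forall>w<W. length (g w) = n) \<and>
              ln (real W) / real n \<le> Rs \<and>
              low_exp \<Theta> P (\<lambda>\<omega>. seq_distortion d (Xvec X n \<omega>) (g (f (Xvec X n \<omega>)))) \<le> D + \<epsilon>)"
proof -
  note S = assms(1)[unfolded sublinear_expectation_space_def]
  have ne0: "\<Theta> \<noteq> {}" using S by (elim conjE) assumption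
  have thall: "\<forall>\<theta>\<in>\<Theta>. prob_space (P \<theta>) \<and> sets (P \<theta>) = sets M \<and> space (P \<theta>) = space M"
    using S by (elim conjE) assumption
  interpret sle M \<Theta> P
    by (rule sle.intro) (use ne0 thall in blast)+
  have X: "\<forall>i. X i \<in> measurable M (count_space UNIV)" using assms(3) .
  define p where "p = pdist P X"
  obtain Q where Qs: "stochastic Q" and QD: "exp_dist_Q \<Theta> p Q d \<le> D"
    and QI: "mutual_info_bar \<Theta> p Q < Rs"
  proof -
    from assms(7) have "(INF Q\<in>{Q. stochastic Q \<and> exp_dist_Q \<Theta> p Q d \<le> D}. ereal (mutual_info_bar \<Theta> p Q)) < ereal Rs"
      unfolding rate_distortion_def p_def .
    then obtain Q where "Q \<in> {Q. stochastic Q \<and> exp_dist_Q \<Theta> p Q d \<le> D}" "ereal (mutual_info_bar \<Theta> p Q) < ereal Rs"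
      unfolding INF_less_iff by blast
    thus ?thesis using that by auto
  qed
  have Q0: "Q x y \<ge> 0" for x y using Qs by (simp add: stochastic_def)
  obtain \<theta>0 where th0: "\<theta>0 \<in> \<Theta>" using ne by blast
  have pp0: "p \<theta> x \<ge> 0" for \<theta> x by (simp add: p_def pdist_def)
  have pp1: "p \<theta> x \<le> 1" if "\<theta> \<in> \<Theta>" for \<theta> x
  proof -
    interpret prob_space "P \<theta>" using ps that .
    show ?thesis by (simp add: p_def pdist_def)
  qed
  have psum: "(\<Sum>x\<in>UNIV. p \<theta>0 x) = 1"
  proof -
    interpret prob_space "P \<theta>0" using ps th0 .
    have "(\<integral>\<omega>. (\<lambda>_. 1::real) (X 0 \<omega>) \<partial>P \<theta>0) = (\<Sum>x\<in>UNIV. pdist P X \<theta>0 x * 1)"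
      by (rule integral_X0[OF X th0])
    thus ?thesis by (simp add: p_def prob_space)
  qed
  have muD: "(\<Sum>x\<in>UNIV. \<Sum>y\<in>UNIV. p \<theta>0 x * Q x y * d x y) \<le> D"
  proof -
    have "(\<Sum>x\<in>UNIV. \<Sum>y\<in>UNIV. p \<theta> x * Q x y * d x y) \<le> (\<Sum>x\<in>UNIV. \<Sum>y\<in>UNIV. Q x y * d x y)"
      if "\<theta> \<in> \<Theta>" for \<theta>
    proof (intro sum_mono)
      fix x y
      have "p \<theta> x * (Q x y * d x y) \<le> 1 * (Q x y * d x y)"
        using pp1[OF that] Q0[of x y] assms(6) by (intro mult_right_mono) auto
      thus "p \<theta> x * Q x y * d x y \<le> Q x y * d x y" by (simp add: mult.assoc)
    qed
    hence bdd: "bdd_above ((\<lambda>\<theta>. \<Sum>x\<in>UNIV. \<Sum>y\<in>UNIV. p \<theta> x * Q x y * d x y) ` \<Theta>)"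
      by (auto simp: bdd_above_def)
    have "(\<Sum>x\<in>UNIV. \<Sum>y\<in>UNIV. p \<theta>0 x * Q x y * d x y) \<le> exp_dist_Q \<Theta> p Q d"
      unfolding exp_dist_Q_def by (rule cSUP_upper[OF th0 bdd])
    thus ?thesis using QD by simp
  qed
  have MI: "(\<Sum>x\<in>UNIV. \<Sum>y\<in>UNIV. p \<theta>0 x * Q x y * ln (Q x y / (\<Sum>x'\<in>UNIV. Q x' y * p \<theta>0 x'))) < Rs"
  proof -
    have "(\<Sum>x\<in>UNIV. \<Sum>y\<in>UNIV. p \<theta> x * Q x y * ln (Q x y / (\<Sum>x'\<in>UNIV. Q x' y * p \<theta> x')))
        \<le> (\<Sum>x\<in>UNIV. \<Sum>y\<in>UNIV. Q x y)" for \<theta>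
      by (intro sum_mono mi_term pp0 Q0)
    hence bdd: "bdd_above ((\<lambda>\<theta>. \<Sum>x\<in>UNIV. \<Sum>y\<in>UNIV. p \<theta> x * Q x y * ln (Q x y / (\<Sum>x'\<in>UNIV. Q x' y * p \<theta> x'))) ` \<Theta>)"
      by (auto simp: bdd_above_def)
    have "(\<Sum>x\<in>UNIV. \<Sum>y\<in>UNIV. p \<theta>0 x * Q x y * ln (Q x y / (\<Sum>x'\<in>UNIV. Q x' y * p \<theta>0 x'))) \<le> mutual_info_bar \<Theta> p Q"
      unfolding mutual_info_bar_def by (rule cSUP_upper[OF th0 bdd])
    thus ?thesis using QI by simp
  qed
  obtain n W c where n1: "n \<ge> 1" and W1: "W \<ge> (1::nat)" and clen: "\<forall>w<W. length (c w) = n"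
    and rate: "ln (real W) / real n \<le> Rs"
    and cost: "(\<Sum>xs\<in>LL n. pw (p \<theta>0) xs * Min ((\<lambda>w. seq_distortion d xs (c w)) ` {..<W})) \<le> D + \<epsilon>"
  proof -
    have dd0: "\<And>x y. d x y \<ge> 0" using assms(6) by blast
    from coding_lemma[OF pp0 psum Qs dd0 muD MI assms(8)] show ?thesis using that by blast
  qed
  define f where "f xs = (SOME w. w < W \<and> seq_distortion d xs (c w) = Min ((\<lambda>w. seq_distortion d xs (c w)) ` {..<W}))" for xs
  have fprop: "f xs < W \<and> seq_distortion d xs (c (f xs)) = Min ((\<lambda>w. seq_distortion d xs (c w)) ` {..<W})" for xs
  proof -
    have "Min ((\<lambda>w. seq_distortion d xs (c w)) ` {..<W}) \<in> (\<lambda>w. seq_distortion d xs (c w)) ` {..<W}"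
    proof (intro Min_in)
      show "(\<lambda>w. seq_distortion d xs (c w)) ` {..<W} \<noteq> {}" using W1 by (auto simp: lessThan_empty_iff)
    qed simp
    then obtain w where "w < W" "seq_distortion d xs (c w) = Min ((\<lambda>w. seq_distortion d xs (c w)) ` {..<W})"
      by auto
    hence "w < W \<and> seq_distortion d xs (c w) = Min ((\<lambda>w. seq_distortion d xs (c w)) ` {..<W})"
      by (rule conjI)
    thus ?thesis unfolding f_def by (rule someI)
  qed
  define F where "F xs = seq_distortion d xs (c (f xs))" for xs
  have low_eq: "low_exp \<Theta> P (\<lambda>\<omega>. F (Xvec X n \<omega>)) = - sub_exp \<Theta> P (\<lambda>\<omega>. - F (Xvec X n \<omega>))"
  proof -
    have "low_exp \<Theta> P (\<lambda>\<omega>. F (Xvec X n \<omega>)) = - Sup (uminus ` (\<lambda>\<theta>. \<integral>\<omega>. F (Xvec X n \<omega>) \<partial>P \<theta>) ` \<Theta>)"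
      unfolding low_exp_def by (rule Inf_real_def)
    also have "uminus ` (\<lambda>\<theta>. \<integral>\<omega>. F (Xvec X n \<omega>) \<partial>P \<theta>) ` \<Theta> = (\<lambda>\<theta>. \<integral>\<omega>. - F (Xvec X n \<omega>) \<partial>P \<theta>) ` \<Theta>"
      unfolding image_image by (simp only: integral_minus)
    finally show ?thesis unfolding sub_exp_def .
  qed
  have "(\<Sum>xs\<in>LL n. pw (p \<theta>0) xs * (- F xs)) \<le> sub_exp \<Theta> P (\<lambda>\<omega>. - F (Xvec X n \<omega>))"
    unfolding p_def by (rule reduction[OF X assms(5) th0])
  hence "low_exp \<Theta> P (\<lambda>\<omega>. F (Xvec X n \<omega>)) \<le> (\<Sum>xs\<in>LL n. pw (p \<theta>0) xs * F xs)"
    unfolding low_eq by (simp add: sum_negf)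
  also have "\<dots> = (\<Sum>xs\<in>LL n. pw (p \<theta>0) xs * Min ((\<lambda>w. seq_distortion d xs (c w)) ` {..<W}))"
    by (intro sum.cong refl) (simp add: F_def fprop)
  also have "\<dots> \<le> D + \<epsilon>" by (rule cost)
  finally have low: "low_exp \<Theta> P (\<lambda>\<omega>. seq_distortion d (Xvec X n \<omega>) (c (f (Xvec X n \<omega>)))) \<le> D + \<epsilon>"
    by (simp add: F_def)
  have fW: "\<forall>xs. length xs = n \<longrightarrow> f xs < W" using fprop by blast
  show ?thesis
    by (intro exI[of _ n] conjI exI[of _ W] exI[of _ f] exI[of _ c]) (use n1 W1 fW clen rate low in auto)
qed

end
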